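(* In the setting of the context (with $V$ bounded on bounded sets), there exist constants $\varepsilon>0$ and $C>0$ such that for all $x\neq y$ in $\mathbb{R}^d$, $$\mathbb{E}[e^{\varepsilon\tau_{x,y}}]\le C(1+V(x)+V(y)).$$
   Context: $X$ is an adapted càdlàg strong Markov process on $\mathbb{R}^d$ with semigroup $(P_t)$ satisfying: (LC) measurable $V:\mathbb{R}^d\to[1,\infty)$, $V(x)\to\infty$ as $|x|\to\infty$, $t_*>0$, $\alpha\in(0,1)$, $\beta\ge0$ with $P_{t_*}V\le\alpha V+\beta$; (H1) for any $R,\delta>0$ there exist $R_0(R)>0$ and $T_0(R,\delta)$ such that for $t\ge T_0$ and $|x|,|y|\le R$, some coupling $\pi$ of $P_t(x,\cdot),P_t(y,\cdot)$ gives positive mass to $\{(x',y'):|x'-y'|\le\delta,|x'|,|y'|\le R_0\}$; (H2) $\lim_{y\to x}\sup_{\|f\|_\infty\le1}[P_tf(x)-P_tf(y)]=0$ for all $t>0,x$. $\|\mu\|_{var}=\sup_{\Gamma}|\mu(\Gamma)|$. Construction: $R_*>0$ is such that for some $\alpha_*\in(0,1)$, $\beta_*>0$ and all $k\in\mathbb{N}$, $\mathbb{E}[V(X_{kt_*}(x))+V(X_{kt_*}(y))]\le\alpha_*(V(x)+V(y))$ if $\sqrt{|x|^2+|y|^2}\ge R_*$ and $\le\beta_*$ otherwise. $T_0>1$ is such that $\sup_{|x|,|y|\le R_*}\|P_t(x,\cdot)-P_t(y,\cdot)\|_{var}<1$ for $t>T_0$; $T=k_0t_*$, $k_0=[\frac{T_0+1}{t_*}+1]$.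 $P_{x,y}$ is a maximal coupling of $P_T(x,\cdot),P_T(y,\cdot)$ (marginals these, and $P_{x,y}\{u\neq v\}=\|P_T(x,\cdot)-P_T(y,\cdot)\|_{var}$), measurable in $(x,y)$. $(S(k))=(S^x(k),S^y(k))$ is the Markov chain on $\mathbb{R}^d\times\mathbb{R}^d$ started at $(x,y)$ with transition probabilities $P_{x,y}$, and $\tau_{x,y}=\inf\{m\ge0:S^x(m)=S^y(m)\}$. *)

theory Defs
  imports "HOL-Probability.Probability"
begin

definition var_dist :: "'a measure \<Rightarrow> 'a measure \<Rightarrow> real" where
  "var_dist M N = (SUP A \<in> sets M. \<bar>measure M A - measure N A\<bar>)"

definition is_coupling :: "('a::topological_space \<times> 'a) measure \<Rightarrow> 'a measure \<Rightarrow> 'a measure \<Rightarrow> bool" where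
  "is_coupling \<pi> M N \<longleftrightarrow> \<pi> \<in> space (prob_algebra borel) \<and>
     distr \<pi> borel fst = M \<and> distr \<pi> borel snd = N"

definition markov_chain_from ::
  "'w measure \<Rightarrow> ('w \<Rightarrow> nat \<Rightarrow> 's) \<Rightarrow> 's measure \<Rightarrow> ('s \<Rightarrow> 's measure) \<Rightarrow> 's \<Rightarrow> bool" where
  "markov_chain_from Om S N K s0 \<longleftrightarrow>
     prob_space Om \<and>
     (\<forall>n. (\<lambda>w. S w n) \<in> measurable Om N) \<and>
     (\<forall>w\<in>space Om. S w 0 = s0) \<and>
     (\<forall>n. distr Om (PiM {..Suc n} (\<lambda>_. N)) (\<lambda>w. restrict (S w) {..Suc n}) =
          bind (distr Om (PiM {..n} (\<lambda>_. N)) (\<lambda>w. restrict (S w) {..n}))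
            (\<lambda>p. distr (K (p n)) (PiM {..Suc n} (\<lambda>_. N))
                    (\<lambda>z. restrict (p(Suc n := z)) {..Suc n})))"

definition coupling_time :: "(nat \<Rightarrow> 'a \<times> 'a) \<Rightarrow> enat" where
  "coupling_time s = (if \<exists>m. fst (s m) = snd (s m)
     then enat (LEAST m. fst (s m) = snd (s m)) else \<infinity>)"

definition exp_enat :: "real \<Rightarrow> enat \<Rightarrow> ennreal" where
  "exp_enat e t = (case t of enat n \<Rightarrow> ennreal (exp (e * real n)) | \<infinity> \<Rightarrow> \<infinity>)"

end

theory Submission
  imports Defs
begin

lemma chain_decay:
  fixes Om :: "'w measure" and S :: "'w \<Rightarrow> nat \<Rightarrow> 's" and h :: "'s \<Rightarrow> ennreal"
  assumes mc: "markov_chain_from Om S N K s0"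
    and K: "K \<in> N \<rightarrow>\<^sub>M subprob_algebra N"
    and D: "D \<in> sets N"
    and h[measurable]: "h \<in> borel_measurable N"
    and drift: "\<And>s. s \<in> space N \<Longrightarrow> (\<integral>\<^sup>+ z. indicator D z * h z \<partial>K s) \<le> \<theta> * h s"
  shows "(\<integral>\<^sup>+ w. (\<Prod>k\<le>n. indicator D (S w k)) * h (S w n) \<partial>Om) \<le> \<theta> ^ n * h s0"
proof -
  have ps: "prob_space Om" and Sm[measurable]: "\<And>n. (\<lambda>w. S w n) \<in> measurable Om N"
    and S0: "\<And>w. w \<in> space Om \<Longrightarrow> S w 0 = s0"
    and bnd: "\<And>n. distr Om (PiM {..Suc n} (\<lambda>_. N)) (\<lambda>w. restrict (S w) {..Suc n}) =
          bind (distr Om (PiM {..n} (\<lambda>_. N)) (\<lambda>w. restrict (S w) {..n}))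
            (\<lambda>p. distr (K (p n)) (PiM {..Suc n} (\<lambda>_. N))
                    (\<lambda>z. restrict (p(Suc n := z)) {..Suc n}))"
    using mc unfolding markov_chain_from_def by auto
  define G where "G n p = (\<Prod>k\<le>n. indicator D (p k)) * h (p n)" for n and p :: "nat \<Rightarrow> 's"
  have Gm: "G n \<in> borel_measurable (PiM {..n} (\<lambda>_. N))" for n
    unfolding G_def using D by measurable
  have Gr: "G n (restrict p {..n}) = G n p" for n p
    unfolding G_def by (auto intro!: prod.cong)
  have rm: "(\<lambda>w. restrict (S w) {..n}) \<in> measurable Om (PiM {..n} (\<lambda>_. N))" for n
    by (rule measurable_restrict) simp
  have I: "(\<integral>\<^sup>+ w. G n (S w) \<partial>Om) = (\<integral>\<^sup>+ p. G n p \<partial>distr Om (PiM {..n} (\<lambda>_. N)) (\<lambda>w. restrict (S w) {..n}))" for n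
    by (subst nn_integral_distr[OF rm]) (auto simp: Gm Gr)
  have "(\<integral>\<^sup>+ w. G n (S w) \<partial>Om) \<le> \<theta> ^ n * h s0"
  proof (induction n)
    case 0
    have "(\<integral>\<^sup>+ w. G 0 (S w) \<partial>Om) = (\<integral>\<^sup>+ w. indicator D s0 * h s0 \<partial>Om)"
      by (rule nn_integral_cong) (simp add: G_def S0)
    also have "\<dots> = indicator D s0 * h s0"
      using prob_space.emeasure_space_1[OF ps] by simp
    also have "\<dots> \<le> h s0" by (simp add: indicator_def)
    finally show ?case by simp
  next
    case (Suc n)
    let ?L = "PiM {..n} (\<lambda>_. N)"
    let ?\<kappa> = "\<lambda>p. distr (K (p n)) (PiM {..Suc n} (\<lambda>_. N)) (\<lambda>z. restrict (p(Suc n := z)) {..Suc n})"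
    have fm: "(\<lambda>(p, z). restrict (p(Suc n := z)) {..Suc n}) \<in> measurable (?L \<Otimes>\<^sub>M N) (PiM {..Suc n} (\<lambda>_. N))"
    proof -
      have "(\<lambda>x. \<lambda>i\<in>{..Suc n}. (if i = Suc n then snd x else fst x i)) \<in> measurable (?L \<Otimes>\<^sub>M N) (PiM {..Suc n} (\<lambda>_. N))"
      proof (rule measurable_restrict)
        fix i assume i: "i \<in> {..Suc n}"
        show "(\<lambda>x. if i = Suc n then snd x else fst x i) \<in> measurable (?L \<Otimes>\<^sub>M N) N"
        proof (cases "i = Suc n")
          case True then show ?thesis by simp
        next
          case False
          then have "i \<in> {..n}" using i by auto
          then show ?thesis using False
            by (simp add: measurable_compose[OF measurable_fst measurable_component_singleton])
        qed
      qed
      then show ?thesis by (rule measurable_cong[THEN iffD1, rotated]) (auto simp: restrict_def)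
    qed
    have gm: "(\<lambda>p. K (p n)) \<in> measurable ?L (subprob_algebra N)"
      by (rule measurable_compose[OF measurable_component_singleton[of n "{..n}" "\<lambda>_. N"] K]) simp
    have km: "?\<kappa> \<in> measurable ?L (subprob_algebra (PiM {..Suc n} (\<lambda>_. N)))"
      by (rule measurable_distr2[OF fm gm])
    have inner: "(\<integral>\<^sup>+ q. G (Suc n) q \<partial>?\<kappa> p) \<le> \<theta> * G n p" if p: "p \<in> space ?L" for p
    proof -
      have pn: "p n \<in> space N" using p by (auto simp: space_PiM)
      have sK: "sets (K (p n)) = sets N" by (rule sets_kernel[OF K pn])
      have m1: "(\<lambda>z. restrict (p(Suc n := z)) {..Suc n}) \<in> measurable (K (p n)) (PiM {..Suc n} (\<lambda>_. N))"
      proof -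
        have "(\<lambda>z. restrict (p(Suc n := z)) {..Suc n}) \<in> measurable N (PiM {..Suc n} (\<lambda>_. N))"
          using measurable_comp[OF measurable_Pair1'[of p ?L N] fm] p by (simp add: comp_def)
        then show ?thesis by (subst measurable_cong_sets[OF sK refl])
      qed
      have hm: "(\<lambda>z. indicator D z * h z) \<in> borel_measurable (K (p n))"
        by (subst measurable_cong_sets[OF sK refl]) (use D in simp)
      have "(\<integral>\<^sup>+ q. G (Suc n) q \<partial>?\<kappa> p) = (\<integral>\<^sup>+ z. G (Suc n) (restrict (p(Suc n := z)) {..Suc n}) \<partial>K (p n))"
        by (rule nn_integral_distr[OF m1]) (simp add: Gm)
      also have "\<dots> = (\<integral>\<^sup>+ z. (\<Prod>k\<le>n. indicator D (p k)) * (indicator D z * h z) \<partial>K (p n))"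
        unfolding Gr by (rule nn_integral_cong) (simp add: G_def atMost_Suc mult_ac)
      also have "\<dots> = (\<Prod>k\<le>n. indicator D (p k)) * (\<integral>\<^sup>+ z. indicator D z * h z \<partial>K (p n))"
        by (rule nn_integral_cmult[OF hm])
      also have "\<dots> \<le> (\<Prod>k\<le>n. indicator D (p k)) * (\<theta> * h (p n))"
        by (rule mult_left_mono[OF drift[OF pn]]) simp
      also have "\<dots> = \<theta> * G n p" by (simp add: G_def mult_ac)
      finally show ?thesis .
    qed
    have "(\<integral>\<^sup>+ w. G (Suc n) (S w) \<partial>Om) = (\<integral>\<^sup>+ p. G (Suc n) p \<partial>(distr Om ?L (\<lambda>w. restrict (S w) {..n}) \<bind> ?\<kappa>))"
      by (simp add: I bnd)
    also have "\<dots> = (\<integral>\<^sup>+ p. (\<integral>\<^sup>+ q. G (Suc n) q \<partial>?\<kappa> p) \<partial>distr Om ?L (\<lambda>w. restrict (S w) {..n}))"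
      by (rule nn_integral_bind[OF Gm]) (subst measurable_cong_sets[OF sets_distr refl], rule km)
    also have "\<dots> \<le> (\<integral>\<^sup>+ p. \<theta> * G n p \<partial>distr Om ?L (\<lambda>w. restrict (S w) {..n}))"
      by (rule nn_integral_mono) (auto intro: inner)
    also have "\<dots> = \<theta> * (\<integral>\<^sup>+ p. G n p \<partial>distr Om ?L (\<lambda>w. restrict (S w) {..n}))"
      by (rule nn_integral_cmult) (simp add: Gm)
    also have "\<dots> \<le> \<theta> * (\<theta> ^ n * h s0)"
      using Suc.IH unfolding I by (rule mult_left_mono) simp
    finally show ?case by (simp add: mult_ac)
  qed
  then show ?thesis by (simp add: G_def)
qed


lemma ennreal_suminf_ones: "(\<Sum>n::nat. (1::ennreal)) = \<top>"
proof (rule ccontr)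
  assume B: "(\<Sum>n::nat. (1::ennreal)) \<noteq> \<top>"
  have A: "(\<Sum>n::nat. ennreal ((\<lambda>_. 1::real) n)) \<noteq> \<top>" using B by (simp only: ennreal_1 not_False_eq_True)
  have "summable (\<lambda>n::nat. (1::real))"
    by (rule summable_suminf_not_top[OF _ A]) simp
  then have "(\<lambda>n::nat. (1::real)) \<longlonglongrightarrow> 0" by (rule summable_LIMSEQ_zero)
  then have "(1::real) = 0" by (simp only: LIMSEQ_const_iff)
  then show False by simp
qed

lemma pointwise_bound:
  fixes s :: "nat \<Rightarrow> 'a \<times> 'a" and g :: "nat \<Rightarrow> ennreal" and \<epsilon> :: real
  assumes eps: "\<epsilon> \<ge> 0" and g: "\<And>n. (\<forall>k\<le>n. fst (s k) \<noteq> snd (s k)) \<Longrightarrow> g n \<ge> 1"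
  shows "exp_enat \<epsilon> (coupling_time s) \<le> 1 + (\<Sum>n. ennreal (exp (\<epsilon> * real (Suc n))) * g n)"
proof (cases "\<exists>m. fst (s m) = snd (s m)")
  case True
  define m where "m = (LEAST m. fst (s m) = snd (s m))"
  have ct: "coupling_time s = enat m" unfolding coupling_time_def m_def using True by simp
  have lt: "fst (s k) \<noteq> snd (s k)" if "k < m" for k using not_less_Least[OF that[unfolded m_def]] .
  show ?thesis
  proof (cases m)
    case 0
    then show ?thesis unfolding ct exp_enat_def by simp
  next
    case (Suc j)
    have gj: "g j \<ge> 1" using g[of j] lt Suc by auto
    have "exp_enat \<epsilon> (coupling_time s) = ennreal (exp (\<epsilon> * real (Suc j)))"
      unfolding ct exp_enat_def Suc by simp
    also have "\<dots> \<le> ennreal (exp (\<epsilon> * real (Suc j))) * g j"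
      using mult_left_mono[OF gj, of "ennreal (exp (\<epsilon> * real (Suc j)))"] by simp
    also have "\<dots> = (\<Sum>n\<in>{j}. ennreal (exp (\<epsilon> * real (Suc n))) * g n)" by simp
    also have "\<dots> \<le> (\<Sum>n. ennreal (exp (\<epsilon> * real (Suc n))) * g n)"
      by (rule sum_le_suminf) auto
    also have "\<dots> \<le> 1 + (\<Sum>n. ennreal (exp (\<epsilon> * real (Suc n))) * g n)" by simp
    finally show ?thesis .
  qed
next
  case False
  have "(\<Sum>n::nat. (1::ennreal)) \<le> (\<Sum>n. ennreal (exp (\<epsilon> * real (Suc n))) * g n)"
  proof (rule suminf_le)
    fix n
    have gn: "g n \<ge> 1" using g[of n] False by auto
    have "(1::ennreal) \<le> ennreal (exp (\<epsilon> * real (Suc n)))" using eps by simp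
    also have "\<dots> \<le> ennreal (exp (\<epsilon> * real (Suc n))) * g n"
      using mult_left_mono[OF gn, of "ennreal (exp (\<epsilon> * real (Suc n)))"] by simp
    finally show "(1::ennreal) \<le> ennreal (exp (\<epsilon> * real (Suc n))) * g n" .
  qed auto
  then have "(\<Sum>n. ennreal (exp (\<epsilon> * real (Suc n))) * g n) = \<top>"
    unfolding ennreal_suminf_ones by (simp add: top_unique)
  then show ?thesis by simp
qed

theorem lemma3p6:
  fixes P :: "real \<Rightarrow> 'a::euclidean_space \<Rightarrow> 'a measure"
    and V :: "'a \<Rightarrow> real"
    and t_star alpha beta :: real
    and R_star alpha_star beta_star T0 :: real
    and Q :: "'a \<times> 'a \<Rightarrow> ('a \<times> 'a) measure"
  assumes kernel: "\<And>t. t \<ge> 0 \<Longrightarrow> P t \<in> borel \<rightarrow>\<^sub>M prob_algebra borel"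
    and semigroup_0: "\<And>x. P 0 x = return borel x"
    and semigroup: "\<And>s t x. s \<ge> 0 \<Longrightarrow> t \<ge> 0 \<Longrightarrow> P (s + t) x = P s x \<bind> P t"
    (* (LC) *)
    and V_meas: "V \<in> borel_measurable borel"
    and V_ge1: "\<And>x. V x \<ge> 1"
    and V_infty: "filterlim V at_top at_infinity"
    and t_star_pos: "t_star > 0"
    and alpha: "0 < alpha" "alpha < 1"
    and beta: "beta \<ge> 0"
    and LC: "\<And>x. (\<integral>\<^sup>+ z. ennreal (V z) \<partial>P t_star x) \<le> ennreal (alpha * V x + beta)"
    (* (H1) *)
    and H1: "\<forall>R>0. \<exists>R0>0. \<forall>\<delta>>0. \<exists>T0'. \<forall>t\<ge>T0'. \<forall>x y. norm x \<le> R \<longrightarrow> norm y \<le> R \<longrightarrow>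
              (\<exists>\<pi>. is_coupling \<pi> (P t x) (P t y) \<and>
                 emeasure \<pi> {(x', y'). dist x' y' \<le> \<delta> \<and> norm x' \<le> R0 \<and> norm y' \<le> R0} > 0)"
    (* (H2) *)
    and H2: "\<And>t x. t > 0 \<Longrightarrow>
              ((\<lambda>y. SUP f \<in> {f \<in> borel_measurable borel. \<forall>z. \<bar>f z\<bar> \<le> (1::real)}.
                   (\<integral>z. f z \<partial>P t x) - (\<integral>z. f z \<partial>P t y)) \<longlongrightarrow> 0) (at x)"
    (* V bounded on bounded sets *)
    and V_bdd: "\<And>B. bounded B \<Longrightarrow> bdd_above (V ` B)"
    (* choice of R_star *)
    and R_star_pos: "R_star > 0"
    and alpha_star: "0 < alpha_star" "alpha_star < 1"
    and beta_star: "beta_star > 0"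
    and R_star: "\<And>k x y. k \<ge> 1 \<Longrightarrow>
        (sqrt ((norm x)\<^sup>2 + (norm y)\<^sup>2) \<ge> R_star \<longrightarrow>
          (\<integral>\<^sup>+ z. ennreal (V z) \<partial>P (real k * t_star) x) + (\<integral>\<^sup>+ z. ennreal (V z) \<partial>P (real k * t_star) y)
            \<le> ennreal (alpha_star * (V x + V y))) \<and>
        (sqrt ((norm x)\<^sup>2 + (norm y)\<^sup>2) < R_star \<longrightarrow>
          (\<integral>\<^sup>+ z. ennreal (V z) \<partial>P (real k * t_star) x) + (\<integral>\<^sup>+ z. ennreal (V z) \<partial>P (real k * t_star) y)
            \<le> ennreal beta_star)"
    (* choice of T0 *)
    and T0_gt1: "T0 > 1"
    and T0: "\<And>t. t > T0 \<Longrightarrow> \<exists>c<1. \<forall>x y. norm x \<le> R_star \<longrightarrow> norm y \<le> R_star \<longrightarrow>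
                 var_dist (P t x) (P t y) \<le> c"
    (* maximal coupling kernel for T = k0 * t_star, k0 = [(T0+1)/t_star + 1] *)
    and Q_meas: "Q \<in> borel \<rightarrow>\<^sub>M prob_algebra borel"
    and Q_coupling: "\<And>x y. is_coupling (Q (x, y))
        (P (real (nat \<lfloor>(T0 + 1) / t_star + 1\<rfloor>) * t_star) x)
        (P (real (nat \<lfloor>(T0 + 1) / t_star + 1\<rfloor>) * t_star) y)"
    and Q_maximal: "\<And>x y. measure (Q (x, y)) {(u, v). u \<noteq> v} =
        var_dist (P (real (nat \<lfloor>(T0 + 1) / t_star + 1\<rfloor>) * t_star) x)
                 (P (real (nat \<lfloor>(T0 + 1) / t_star + 1\<rfloor>) * t_star) y)"
  shows "\<exists>\<epsilon>>0. \<exists>C>0. \<forall>x y. x \<noteq> y \<longrightarrow>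
           (\<forall>(Om :: 'w measure) S. markov_chain_from Om S borel Q (x, y) \<longrightarrow>
              (\<integral>\<^sup>+ w. exp_enat \<epsilon> (coupling_time (S w)) \<partial>Om) \<le> ennreal (C * (1 + V x + V y)))"
proof -
  define k0 where "k0 = nat \<lfloor>(T0 + 1) / t_star + 1\<rfloor>"
  define T where "T = real k0 * t_star"
  have k0ge: "real k0 > (T0 + 1) / t_star" unfolding k0_def
    using T0_gt1 t_star_pos by linarith
  have k0_1: "k0 \<ge> 1"
  proof -
    have "(T0 + 1) / t_star > 0" using T0_gt1 t_star_pos by simp
    then show ?thesis using k0ge by linarith
  qed
  have TT0: "T > T0"
  proof -
    have "real k0 * t_star > (T0 + 1) / t_star * t_star"
      using k0ge t_star_pos by (intro mult_strict_right_mono) auto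
    then show ?thesis unfolding T_def using t_star_pos by simp
  qed
  obtain c where c1: "c < 1" and cb: "\<And>x y. norm x \<le> R_star \<Longrightarrow> norm y \<le> R_star \<Longrightarrow> var_dist (P T x) (P T y) \<le> c"
    using T0[OF TT0] by blast
  define b where "b = 2 * beta_star / (1 - c)"
  have b_pos: "b > 0" unfolding b_def using c1 beta_star by simp
  have bc: "b * (1 - c) = 2 * beta_star" unfolding b_def using c1 by simp
  define \<theta> where "\<theta> = max ((1 + c) / 2) ((2 * alpha_star + b) / (2 + b))"
  have th1: "\<theta> < 1" unfolding \<theta>_def using c1 alpha_star b_pos by (auto simp: field_simps)
  have th_as: "\<theta> \<ge> alpha_star" unfolding \<theta>_def using alpha_star b_pos
    by (auto simp: field_simps intro!: max.coboundedI2)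
  have th_pos: "\<theta> > 0" using th_as alpha_star by simp
  have th_c: "\<theta> \<ge> (1 + c) / 2" unfolding \<theta>_def by simp
  have th_b: "\<theta> * (2 + b) \<ge> 2 * alpha_star + b"
  proof -
    have "\<theta> \<ge> (2 * alpha_star + b) / (2 + b)" unfolding \<theta>_def by simp
    then show ?thesis using b_pos by (simp add: field_simps)
  qed
  let ?N = "borel :: ('a \<times> 'a) measure"
  define D where "D = {s :: 'a \<times> 'a. fst s \<noteq> snd s}"
  have fstm[measurable]: "fst \<in> borel_measurable ?N" by (subst borel_prod[symmetric]) simp
  have sndm[measurable]: "snd \<in> borel_measurable ?N" by (subst borel_prod[symmetric]) simp
  have Dm: "D \<in> sets ?N"
  proof -
    have "{s \<in> space ?N. fst s = snd s} \<in> sets ?N" by measurable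
    then have "space ?N - {s \<in> space ?N. fst s = snd s} \<in> sets ?N" by auto
    moreover have "space ?N - {s \<in> space ?N. fst s = snd s} = D" unfolding D_def by auto
    ultimately show ?thesis by metis
  qed
  define h where "h s = ennreal (V (fst s) + V (snd s) + b)" for s :: "'a \<times> 'a"
  have hm: "h \<in> borel_measurable ?N" unfolding h_def using V_meas by measurable
  have Qs: "Q \<in> ?N \<rightarrow>\<^sub>M subprob_algebra ?N" by (rule measurable_prob_algebraD[OF Q_meas])
  have drift: "(\<integral>\<^sup>+ z. indicator D z * h z \<partial>Q s) \<le> ennreal \<theta> * h s" for s
  proof -
    obtain x y where s: "s = (x, y)" by (cases s)
    have cp: "is_coupling (Q (x, y)) (P T x) (P T y)" using Q_coupling unfolding T_def k0_def .
    have Qp: "Q (x, y) \<in> space (prob_algebra borel)" and dx: "distr (Q (x, y)) borel fst = P T x"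
      and dy: "distr (Q (x, y)) borel snd = P T y" using cp unfolding is_coupling_def by auto
    have psQ: "prob_space (Q (x, y))" and sQ: "sets (Q (x, y)) = sets ?N"
      using Qp by (auto simp: space_prob_algebra)
    have mQ: "f \<in> borel_measurable (Q (x, y))" if "f \<in> borel_measurable ?N" for f :: "_ \<Rightarrow> ennreal"
      using that by (subst measurable_cong_sets[OF sQ refl])
    have fstQ: "fst \<in> Q (x, y) \<rightarrow>\<^sub>M borel" by (subst measurable_cong_sets[OF sQ refl]) simp
    have sndQ: "snd \<in> Q (x, y) \<rightarrow>\<^sub>M borel" by (subst measurable_cong_sets[OF sQ refl]) simp
    have Vx: "(\<integral>\<^sup>+ z. ennreal (V (fst z)) \<partial>Q (x, y)) = (\<integral>\<^sup>+ z. ennreal (V z) \<partial>P T x)"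
      unfolding dx[symmetric] by (subst nn_integral_distr[OF fstQ]) (use V_meas in auto)
    have Vy: "(\<integral>\<^sup>+ z. ennreal (V (snd z)) \<partial>Q (x, y)) = (\<integral>\<^sup>+ z. ennreal (V z) \<partial>P T y)"
      unfolding dy[symmetric] by (subst nn_integral_distr[OF sndQ]) (use V_meas in auto)
    define q where "q = measure (Q (x, y)) D"
    have qD: "emeasure (Q (x, y)) D = ennreal q" unfolding q_def
      using finite_measure.emeasure_eq_measure[OF prob_space.finite_measure[OF psQ]] by simp
    have q01: "0 \<le> q" "q \<le> 1" unfolding q_def using prob_space.prob_le_1[OF psQ] by auto
    have qvar: "q = var_dist (P T x) (P T y)"
      unfolding q_def T_def k0_def Q_maximal[symmetric] D_def
      by (rule arg_cong[where f="measure (Q (x, y))"]) auto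
    have "(\<integral>\<^sup>+ z. indicator D z * h z \<partial>Q (x, y)) \<le>
          (\<integral>\<^sup>+ z. ennreal (V (fst z)) + ennreal (V (snd z)) + ennreal b * indicator D z \<partial>Q (x, y))"
    proof (rule nn_integral_mono)
      fix z :: "'a \<times> 'a"
      have "ennreal (V (fst z) + V (snd z) + b) = ennreal (V (fst z)) + ennreal (V (snd z)) + ennreal b"
        using V_ge1[of "fst z"] V_ge1[of "snd z"] b_pos by (simp add: ennreal_plus)
      then show "indicator D z * h z \<le> ennreal (V (fst z)) + ennreal (V (snd z)) + ennreal b * indicator D z"
        unfolding h_def by (auto simp: indicator_def)
    qed
    also have "\<dots> = (\<integral>\<^sup>+ z. ennreal (V z) \<partial>P T x) + (\<integral>\<^sup>+ z. ennreal (V z) \<partial>P T y) + ennreal b * ennreal q"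
      using V_meas Dm
      by (simp add: nn_integral_add mQ nn_integral_cmult_indicator[of D] Vx Vy qD sQ)
    finally have calc1: "(\<integral>\<^sup>+ z. indicator D z * h z \<partial>Q (x, y)) \<le> (\<integral>\<^sup>+ z. ennreal (V z) \<partial>P T x) + (\<integral>\<^sup>+ z. ennreal (V z) \<partial>P T y) + ennreal b * ennreal q" .
    have bqe: "ennreal b * ennreal q = ennreal (b * q)" using b_pos q01 by (simp add: ennreal_mult)
    have main: "(\<integral>\<^sup>+ z. ennreal (V z) \<partial>P T x) + (\<integral>\<^sup>+ z. ennreal (V z) \<partial>P T y) + ennreal b * ennreal q \<le> ennreal \<theta> * h (x, y)"
    proof (cases "sqrt ((norm x)\<^sup>2 + (norm y)\<^sup>2) \<ge> R_star")
      case True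
      have A: "(\<integral>\<^sup>+ z. ennreal (V z) \<partial>P T x) + (\<integral>\<^sup>+ z. ennreal (V z) \<partial>P T y) \<le> ennreal (alpha_star * (V x + V y))"
        using R_star[OF k0_1, of x y] True unfolding T_def by auto
      have W2: "V x + V y \<ge> 2" using V_ge1[of x] V_ge1[of y] by simp
      have "(V x + V y - 2) * (\<theta> - alpha_star) \<ge> 0" using W2 th_as by simp
      then have real: "alpha_star * (V x + V y) + b * q \<le> \<theta> * (V x + V y + b)"
      proof -
        have bq: "b * q \<le> b" using mult_left_mono[OF q01(2), of b] b_pos by simp
        show ?thesis using th_b bq \<open>(V x + V y - 2) * (\<theta> - alpha_star) \<ge> 0\<close>
          by (simp add: algebra_simps)
      qed
      have "(\<integral>\<^sup>+ z. ennreal (V z) \<partial>P T x) + (\<integral>\<^sup>+ z. ennreal (V z) \<partial>P T y) + ennreal b * ennreal q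
          \<le> ennreal (alpha_star * (V x + V y)) + ennreal (b * q)"
        unfolding bqe using A by (rule add_right_mono)
      also have "\<dots> = ennreal (alpha_star * (V x + V y) + b * q)"
        using alpha_star V_ge1[of x] V_ge1[of y] b_pos q01 by (simp add: ennreal_plus)
      also have "\<dots> \<le> ennreal (\<theta> * (V x + V y + b))" using real by (rule ennreal_leI)
      also have "\<dots> = ennreal \<theta> * h (x, y)" unfolding h_def using th_pos V_ge1[of x] V_ge1[of y] b_pos by (simp add: ennreal_mult)
      finally show ?thesis .
    next
      case False
      have A: "(\<integral>\<^sup>+ z. ennreal (V z) \<partial>P T x) + (\<integral>\<^sup>+ z. ennreal (V z) \<partial>P T y) \<le> ennreal beta_star"
        using R_star[OF k0_1, of x y] False unfolding T_def by auto
      have nx: "norm x \<le> R_star"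
      proof -
        have "norm x = sqrt ((norm x)\<^sup>2)" by simp
        also have "\<dots> \<le> sqrt ((norm x)\<^sup>2 + (norm y)\<^sup>2)" by (rule real_sqrt_le_mono) simp
        finally show ?thesis using False by linarith
      qed
      have ny: "norm y \<le> R_star"
      proof -
        have "norm y = sqrt ((norm y)\<^sup>2)" by simp
        also have "\<dots> \<le> sqrt ((norm x)\<^sup>2 + (norm y)\<^sup>2)" by (rule real_sqrt_le_mono) simp
        finally show ?thesis using False by linarith
      qed
      have qc: "q \<le> c" using cb[OF nx ny] qvar by simp
      have W0: "V x + V y + b \<ge> b" using V_ge1[of x] V_ge1[of y] by simp
      have "beta_star + b * q \<le> beta_star + b * c" using qc b_pos by simp
      also have "\<dots> \<le> \<theta> * b" using th_c b_pos bc mult_right_mono[OF th_c, of b] by (simp add: algebra_simps)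
      also have "\<dots> \<le> \<theta> * (V x + V y + b)" using W0 th_pos by simp
      finally have real: "beta_star + b * q \<le> \<theta> * (V x + V y + b)" .
      have "(\<integral>\<^sup>+ z. ennreal (V z) \<partial>P T x) + (\<integral>\<^sup>+ z. ennreal (V z) \<partial>P T y) + ennreal b * ennreal q
          \<le> ennreal beta_star + ennreal (b * q)"
        unfolding bqe using A by (rule add_right_mono)
      also have "\<dots> = ennreal (beta_star + b * q)"
        using beta_star b_pos q01 by (simp add: ennreal_plus)
      also have "\<dots> \<le> ennreal (\<theta> * (V x + V y + b))" using real by (rule ennreal_leI)
      also have "\<dots> = ennreal \<theta> * h (x, y)" unfolding h_def using th_pos V_ge1[of x] V_ge1[of y] b_pos by (simp add: ennreal_mult)
      finally show ?thesis .
    qed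
    from calc1 main show ?thesis unfolding s by (rule order_trans)
  qed
  define r where "r = sqrt \<theta>"
  have r0: "0 < r" and r1: "r < 1" unfolding r_def using th_pos th1 by auto
  have rth: "r * r = \<theta>" unfolding r_def using th_pos by simp
  define \<epsilon> where "\<epsilon> = - ln r"
  have eps_pos: "\<epsilon> > 0" unfolding \<epsilon>_def using r0 r1 by simp
  have exp_eps: "exp \<epsilon> = 1 / r" unfolding \<epsilon>_def using r0 by (simp add: exp_minus inverse_eq_divide)
  define H0 where "H0 = 1 / (r * (1 - r))"
  have H0_pos: "H0 > 0" unfolding H0_def using r0 r1 by simp
  define C where "C = 1 + H0 * (1 + b)"
  have C_pos: "C > 0" unfolding C_def using H0_pos b_pos by (simp add: add_pos_pos)
  have h_ge1: "h s \<ge> 1" for s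
  proof -
    have "1 \<le> V (fst s) + V (snd s) + b" using V_ge1[of "fst s"] V_ge1[of "snd s"] b_pos by simp
    then show ?thesis unfolding h_def by simp
  qed
  have main: "(\<integral>\<^sup>+ w. exp_enat \<epsilon> (coupling_time (S w)) \<partial>Om) \<le> ennreal (C * (1 + V x + V y))"
    if mc: "markov_chain_from Om S borel Q (x, y)" for x y and Om :: "'w measure" and S
  proof -
    have Sm[measurable]: "\<And>n. (\<lambda>w. S w n) \<in> measurable Om ?N"
      using mc unfolding markov_chain_from_def by auto
    define F where "F n w = (\<Prod>k\<le>n. indicator D (S w k)) * h (S w n)" for n w
    have Fm: "(\<lambda>w. F n w) \<in> borel_measurable Om" for n
      unfolding F_def using Dm hm by measurable
    have dec: "(\<integral>\<^sup>+ w. F n w \<partial>Om) \<le> ennreal \<theta> ^ n * h (x, y)" for n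
      unfolding F_def by (rule chain_decay[OF mc Qs Dm hm drift])
    define e where "e n = ennreal (exp (\<epsilon> * real (Suc n)))" for n
    define H where "H = V x + V y + b"
    have H_pos: "H \<ge> 0" unfolding H_def using V_ge1[of x] V_ge1[of y] b_pos by simp
    have hxy: "h (x, y) = ennreal H" unfolding h_def H_def by simp
    have pw: "exp_enat \<epsilon> (coupling_time (S w)) \<le> 1 + (\<Sum>n. e n * F n w)" for w
      unfolding e_def
    proof (rule pointwise_bound)
      show "0 \<le> \<epsilon>" using eps_pos by simp
      fix n assume "\<forall>k\<le>n. fst (S w k) \<noteq> snd (S w k)"
      then have "(\<Prod>k\<le>n. indicator D (S w k) :: ennreal) = 1"
        unfolding D_def by (intro prod.neutral) auto
      then show "F n w \<ge> 1" unfolding F_def using h_ge1 by simp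
    qed
    have termeq: "e n * (ennreal \<theta> ^ n * h (x, y)) = ennreal (r ^ n * (H / r))" for n
    proof -
      have "exp (\<epsilon> * real (Suc n)) = (1 / r) ^ Suc n"
        using exp_of_nat_mult[of "Suc n" \<epsilon>] exp_eps by (simp add: mult.commute)
      moreover have "\<theta> ^ n = r ^ n * r ^ n" unfolding rth[symmetric] by (simp add: power_mult_distrib)
      ultimately have "exp (\<epsilon> * real (Suc n)) * (\<theta> ^ n * H) = r ^ n * (H / r)"
        using r0 by (simp add: field_simps)
      moreover have "e n * (ennreal \<theta> ^ n * h (x, y)) = ennreal (exp (\<epsilon> * real (Suc n)) * (\<theta> ^ n * H))"
        unfolding e_def hxy using th_pos H_pos
        by (simp add: ennreal_mult ennreal_power)
      ultimately show ?thesis by simp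
    qed
    have sums: "(\<lambda>n. r ^ n * (H / r)) sums (1 / (1 - r) * (H / r))"
      by (rule sums_mult2[OF geometric_sums]) (use r0 r1 in simp)
    have sumE: "(\<Sum>n. ennreal (r ^ n * (H / r))) = ennreal (1 / (1 - r) * (H / r))"
    proof -
      have "(\<lambda>n. ennreal (r ^ n * (H / r))) sums ennreal (1 / (1 - r) * (H / r))"
        using sums r0 r1 H_pos by (subst sums_ennreal) auto
      then show ?thesis by (rule sums_unique[symmetric])
    qed
    have "(\<integral>\<^sup>+ w. exp_enat \<epsilon> (coupling_time (S w)) \<partial>Om) \<le> (\<integral>\<^sup>+ w. 1 + (\<Sum>n. e n * F n w) \<partial>Om)"
      by (rule nn_integral_mono) (rule pw)
    also have "\<dots> = (\<integral>\<^sup>+ w. 1 \<partial>Om) + (\<integral>\<^sup>+ w. (\<Sum>n. e n * F n w) \<partial>Om)"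
      by (rule nn_integral_add) (use Fm in auto)
    also have "(\<integral>\<^sup>+ w. (\<Sum>n. e n * F n w) \<partial>Om) = (\<Sum>n. \<integral>\<^sup>+ w. e n * F n w \<partial>Om)"
      by (rule nn_integral_suminf) (use Fm in auto)
    also have "\<dots> = (\<Sum>n. e n * \<integral>\<^sup>+ w. F n w \<partial>Om)"
      by (rule suminf_cong) (rule nn_integral_cmult[OF Fm])
    also have "\<dots> \<le> (\<Sum>n. e n * (ennreal \<theta> ^ n * h (x, y)))"
      by (rule suminf_le) (auto intro: mult_left_mono dec)
    also have "\<dots> = ennreal (1 / (1 - r) * (H / r))" unfolding termeq sumE ..
    also have "(\<integral>\<^sup>+ w. 1 \<partial>Om) = 1"
    proof -
      have "prob_space Om" using mc unfolding markov_chain_from_def by simp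
      then show "(\<integral>\<^sup>+ w. 1 \<partial>Om) = 1" using prob_space.emeasure_space_1 by simp
    qed
    finally have A: "(\<integral>\<^sup>+ w. exp_enat \<epsilon> (coupling_time (S w)) \<partial>Om) \<le> 1 + ennreal (1 / (1 - r) * (H / r))"
      by (simp add: add_left_mono)
    have real: "1 + 1 / (1 - r) * (H / r) \<le> C * (1 + V x + V y)"
    proof -
      have eq: "1 / (1 - r) * (H / r) = H0 * H" unfolding H0_def using r0 r1 by (simp add: field_simps)
      have "H \<le> (1 + b) * (1 + V x + V y)" unfolding H_def
        using V_ge1[of x] V_ge1[of y] b_pos by (simp add: algebra_simps)
      then have "H0 * H \<le> H0 * ((1 + b) * (1 + V x + V y))" using H0_pos by simp
      then show ?thesis unfolding eq C_def using V_ge1[of x] V_ge1[of y] by (simp add: algebra_simps)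
    qed
    have "1 + ennreal (1 / (1 - r) * (H / r)) = ennreal (1 + 1 / (1 - r) * (H / r))"
      using r0 r1 H_pos by (simp add: ennreal_plus)
    also have "\<dots> \<le> ennreal (C * (1 + V x + V y))" using real by (rule ennreal_leI)
    finally show "(\<integral>\<^sup>+ w. exp_enat \<epsilon> (coupling_time (S w)) \<partial>Om) \<le> ennreal (C * (1 + V x + V y))"
      using A by simp
  qed
  show ?thesis
    apply (rule exI[of _ \<epsilon>], rule conjI[OF eps_pos])
    apply (rule exI[of _ C], rule conjI[OF C_pos])
    apply (intro allI impI)
    apply (erule main)
    done
qed

end
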